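(* The Mathew–Nadkarni transformation $T_\phi$ on $[0,1)\times\mathbb{Z}_2$ with the measure $m\otimes h$ is $\tfrac12$-rigid: there is a sequence of integers $(n_k)$ such that $\liminf_{k\to\infty}(m\otimes h)(T_\phi^{n_k}B\cap B)\geq\tfrac12 (m\otimes h)(B)$ for every Borel set $B\subset[0,1)\times\mathbb{Z}_2$.
   Context: $m$ is Lebesgue measure on $[0,1)$, $\mathbb{Z}_2=\{0,1\}$ with Haar measure $h=\tfrac12\delta_0+\tfrac12\delta_1$. $T:[0,1)\to[0,1)$ is the von Neumann–Kakutani adding machine (odometer), defined by mapping each interval $[1-2^{-n},1-2^{-(n+1)})$ linearly (by translation) onto $[2^{-(n+1)},2^{-n})$, $n=0,1,2,\dots$. The cocycle $\phi:[0,1)\to\mathbb{Z}_2$ is defined to be $0$ on the intervals $[1-2^{-n},1-2^{-n}+2^{-(n+2)})$ and $1$ on the intervals $[1-2^{-n}+2^{-(n+2)},1-2^{-(n+1)})$, $n=0,1,2,\dots$. The Mathew–Nadkarni transformation is the skew product $T_\phi(x,g)=(Tx,\phi(x)+g)$ (addition mod 2), which preserves $m\otimes h$; it is known (Mathew–Nadkarni) to have spectrum consisting of a Lebesgue component of multiplicity 2 together with a discrete component. *)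

theory Defs
  imports "HOL-Probability.Probability"
begin

text \<open>Index n of the interval [1 - 2^(-n), 1 - 2^(-(n+1))) containing x in [0,1).\<close>
definition odo_level :: "real \<Rightarrow> nat" where
  "odo_level x = nat \<lfloor>- log 2 (1 - x)\<rfloor>"

text \<open>Von Neumann--Kakutani adding machine: translate
  [1 - 2^(-n), 1 - 2^(-(n+1))) onto [2^(-(n+1)), 2^(-n)).  Outside [0,1) it is the identity
  (irrelevant convention).\<close>
definition odometer :: "real \<Rightarrow> real" where
  "odometer x = (if 0 \<le> x \<and> x < 1
      then x - (1 - (1/2) ^ odo_level x) + (1/2) ^ (Suc (odo_level x))
      else x)"

text \<open>The cocycle phi into Z_2 (Z_2 modelled as bool, True = 1, addition = xor).\<close>
definition mn_cocycle :: "real \<Rightarrow> bool" where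
  "mn_cocycle x = (if 0 \<le> x \<and> x < 1
      then \<not> (x < 1 - (1/2) ^ odo_level x + (1/2) ^ (odo_level x + 2))
      else False)"

definition mathew_nadkarni :: "real \<times> bool \<Rightarrow> real \<times> bool" where
  "mathew_nadkarni p = (odometer (fst p), mn_cocycle (fst p) \<noteq> snd p)"

definition haar_Z2 :: "bool measure" where
  "haar_Z2 = measure_pmf (pmf_of_set UNIV)"

definition mn_measure :: "(real \<times> bool) measure" where
  "mn_measure = restrict_space lborel {0..<1} \<Otimes>\<^sub>M haar_Z2"

end

theory Submission
  imports Defs
begin
lemma half_pow_powr: "(1/2::real)^n = 2 powr (- real n)"
  by (simp add: powr_minus powr_realpow power_one_over inverse_eq_divide)

lemma lev_unique:
  assumes "1 - (1/2)^n \<le> y" "y < 1 - (1/2::real)^Suc n"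
  shows "odo_level y = n"
proof -
  have "0 < (1/2::real)^Suc n" by simp
  hence p: "0 < 1 - y" using assms(2) by linarith
  have "(1/2::real)^Suc n < 1 - y" "1 - y \<le> (1/2)^n" using assms by auto
  hence "2 powr (- real (Suc n)) < 1 - y" "1 - y \<le> 2 powr (- real n)"
    unfolding half_pow_powr by auto
  hence "- real (Suc n) < log 2 (1-y)" "log 2 (1-y) \<le> - real n"
    using p by (simp_all add: less_log_iff log_le_iff del: of_nat_Suc)
  hence "\<lfloor>- log 2 (1-y)\<rfloor> = int n" by (simp add: floor_eq_iff)
  thus ?thesis unfolding odo_level_def by simp
qed

lemma lev_char:
  assumes "0 \<le> y" "y < (1::real)"
  shows "1 - (1/2)^(odo_level y) \<le> y \<and> y < 1 - (1/2)^Suc (odo_level y)"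
proof -
  define t where "t = - log 2 (1-y)"
  have p: "0 < 1 - y" "1 - y \<le> 1" using assms by auto
  have t0: "0 \<le> t" unfolding t_def using p by simp
  have e: "1 - y = 2 powr (- t)" unfolding t_def using p by simp
  have n: "real (odo_level y) = of_int \<lfloor>t\<rfloor>" unfolding odo_level_def t_def[symmetric] using t0 by simp
  have a: "real (odo_level y) \<le> t" "t < real (odo_level y) + 1" using n by linarith+
  have "2 powr (- t) \<le> 2 powr (- real (odo_level y))" using a by (intro powr_mono) auto
  moreover have "2 powr (- real (Suc (odo_level y))) < 2 powr (- t)" using a by (intro powr_less_mono) auto
  ultimately show ?thesis using e unfolding half_pow_powr by linarith
qed

lemma T_eq: "0 \<le> y \<Longrightarrow> y < 1 \<Longrightarrow> odometer y = y - 1 + (1/2)^odo_level y + (1/2)^Suc (odo_level y)"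
  unfolding odometer_def by simp

lemma T_bounds:
  assumes "0 \<le> y" "y < (1::real)"
  shows "(1/2)^Suc (odo_level y) \<le> odometer y \<and> odometer y < (1/2)^odo_level y"
  using lev_char[OF assms] T_eq[OF assms] by auto

lemma T_range: assumes "0 \<le> y" "y < (1::real)" shows "0 < odometer y \<and> odometer y < 1"
proof -
  have "(0::real) < (1/2)^Suc (odo_level y)" "(1/2::real)^(odo_level y) \<le> 1"
    by (auto simp: power_le_one)
  thus ?thesis using T_bounds[OF assms] by linarith
qed

lemma lev_half: "0 \<le> y \<Longrightarrow> y < (1::real) \<Longrightarrow> odo_level (y/2) = 0"
  by (rule lev_unique) auto

lemma lev_shift: assumes "0 \<le> y" "y < (1::real)" shows "odo_level ((1+y)/2) = Suc (odo_level y)"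
  using lev_char[OF assms] by (intro lev_unique) auto

lemma T_half: "0 \<le> y \<Longrightarrow> y < (1::real) \<Longrightarrow> odometer (y/2) = (1+y)/2"
  using T_eq[of "y/2"] lev_half[of y] by auto

lemma T_shift: assumes "0 \<le> y" "y < (1::real)" shows "odometer ((1+y)/2) = odometer y / 2"
  using T_eq[of "(1+y)/2"] lev_shift[OF assms] T_eq[OF assms] assms by auto

lemma phi_half: "0 \<le> y \<Longrightarrow> y < (1::real) \<Longrightarrow> mn_cocycle (y/2) = (1/2 \<le> y)"
  unfolding mn_cocycle_def using lev_half[of y] by auto

lemma phi_shift: assumes "0 \<le> y" "y < (1::real)" shows "mn_cocycle ((1+y)/2) = mn_cocycle y"
  unfolding mn_cocycle_def using lev_shift[OF assms] assms by auto

lemma T_ge_half: assumes "0 \<le> y" "y < (1::real)" shows "(1/2 \<le> odometer y) = (y < 1/2)"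
proof (cases "y < 1/2")
  case True
  then show ?thesis using T_half[of "2*y"] assms by auto
next
  case False
  then have "odometer y = odometer (2*y-1) / 2" using T_shift[of "2*y-1"] assms by auto
  then show ?thesis using T_range[of "2*y-1"] False assms by auto
qed

lemma TT: assumes "0 \<le> y" "y < (1::real)" "b < (2::nat)"
  shows "odometer (odometer ((real b + y)/2)) = (real b + odometer y)/2"
proof -
  have "b = 0 \<or> b = 1" using assms by auto
  thus ?thesis
  proof
    assume "b = 0"
    have "odometer (odometer (y/2)) = odometer y / 2"
      by (subst T_half[OF assms(1,2)]) (rule T_shift[OF assms(1,2)])
    thus ?thesis using \<open>b = 0\<close> by simp
  next
    assume b: "b = 1"
    have "odometer ((1 + y)/2) = odometer y / 2" by (rule T_shift[OF assms(1,2)])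
    moreover have "odometer (odometer y / 2) = (1 + odometer y)/2"
      using T_range[OF assms(1,2)] by (intro T_half) auto
    ultimately have "odometer (odometer ((1+y)/2)) = (1 + odometer y)/2" by (simp only:)
    thus ?thesis using b by simp
  qed
qed

lemma decomp2: fixes a :: nat and y :: real
  shows "(real a + y) / 2^Suc k = (real (a div 2) + (real (a mod 2) + y)/2) / 2^k"
proof -
  have "real a = 2 * real (a div 2) + real (a mod 2)"
    by (metis of_nat_add of_nat_mult of_nat_numeral div_mult_mod_eq mult.commute)
  thus ?thesis by (simp add: field_simps)
qed

lemma R1: "a < 2^k \<Longrightarrow> 0 \<le> y \<Longrightarrow> y < 1 \<Longrightarrow>
   (odometer^^(2^k)) ((real a + y)/2^k) = (real a + odometer y)/2^k"
proof (induction k arbitrary: a y)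
  case 0
  then show ?case by simp
next
  case (Suc k)
  define a' b where "a' = a div 2" and "b = a mod 2"
  define w where "w = (real b + y)/2"
  have b2: "b < 2" unfolding b_def by simp
  have a': "a' < 2^k" using Suc.prems(1) unfolding a'_def by auto
  have w: "0 \<le> w" "w < 1" using Suc.prems b2 unfolding w_def by auto
  have Tw: "0 \<le> odometer w" "odometer w < 1" using T_range[OF w] by auto
  have eq: "(real a + y)/2^Suc k = (real a' + w)/2^k" unfolding a'_def b_def w_def by (rule decomp2)
  have eq2: "(real a + odometer y)/2^Suc k = (real a' + (real b + odometer y)/2)/2^k"
    unfolding a'_def b_def by (rule decomp2)
  have "(odometer^^(2^Suc k)) ((real a + y)/2^Suc k)
      = (odometer^^(2^k)) ((odometer^^(2^k)) ((real a' + w)/2^k))"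
  proof -
    have "(2::nat)^Suc k = 2^k + 2^k" by simp
    hence "odometer^^(2^Suc k) = odometer^^(2^k) \<circ> odometer^^(2^k)" by (simp only: funpow_add)
    thus ?thesis by (simp only: eq comp_apply)
  qed
  also have "\<dots> = (odometer^^(2^k)) ((real a' + odometer w)/2^k)" using Suc.IH[OF a' w] by simp
  also have "\<dots> = (real a' + odometer (odometer w))/2^k" using Suc.IH[OF a' Tw] by simp
  also have "\<dots> = (real a + odometer y)/2^Suc k" unfolding eq2 w_def TT[OF Suc.prems(2,3) b2] ..
  finally show ?case .
qed

definition gam :: "real \<Rightarrow> bool" where "gam y = (mn_cocycle y \<noteq> (1/2 \<le> y))"

fun cc :: "nat \<Rightarrow> real \<Rightarrow> bool" where
  "cc 0 x = False"
| "cc (Suc n) x = (cc n x \<noteq> mn_cocycle ((odometer^^n) x))"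

lemma MN_pow: "(mathew_nadkarni^^n) (x, g) = ((odometer^^n) x, g \<noteq> cc n x)"
  by (induction n) (auto simp: mathew_nadkarni_def)

lemma cc_add: "cc (m + n) x = (cc m x \<noteq> cc n ((odometer^^m) x))"
proof (induction n)
  case (Suc n)
  have "(odometer^^(m+n)) x = (odometer^^n) ((odometer^^m) x)"
    by (metis add.commute comp_apply funpow_add)
  then show ?case using Suc by auto
qed simp

lemma C1: assumes "0 \<le> y" "y < (1::real)" "b < (2::nat)"
  shows "cc 2 ((real b + y)/2) = (gam y \<noteq> (b = 1))"
proof -
  have cc2: "cc 2 x = (mn_cocycle x \<noteq> mn_cocycle (odometer x))" for x
    by (simp add: numeral_2_eq_2)
  have "b = 0 \<or> b = 1" using assms by auto
  thus ?thesis
  proof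
    assume "b = 0" thus ?thesis
      by (simp add: T_half[OF assms(1,2)] phi_half[OF assms(1,2)] phi_shift[OF assms(1,2)] cc2 gam_def) blast
  next
    assume b: "b = 1"
    have Ty: "0 \<le> odometer y" "odometer y < 1" using T_range[OF assms(1,2)] by auto
    have TGH: "(1 \<le> odometer y * 2) = (\<not> 1 \<le> y * 2)" using T_ge_half[OF assms(1,2)] by auto
    show ?thesis using b by (simp add: T_shift[OF assms(1,2)] phi_shift[OF assms(1,2)] phi_half[OF Ty]
       TGH cc2 gam_def)
  qed
qed

lemma G2: assumes "0 \<le> y" "y < (1::real)" "b < (2::nat)"
  shows "(gam ((real b + y)/2) \<noteq> gam (odometer ((real b + y)/2))) = (\<not> (gam y \<noteq> (b = 1)))"
proof -
  have "b = 0 \<or> b = 1" using assms by auto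
  thus ?thesis
  proof
    assume b: "b = 0"
    have "\<not> (1/2 \<le> y/2)" using assms by auto
    moreover have "1/2 \<le> (1+y)/2" using assms by auto
    ultimately show ?thesis using b
      by (simp add: T_half[OF assms(1,2)] phi_half[OF assms(1,2)] phi_shift[OF assms(1,2)] gam_def) blast
  next
    assume b: "b = 1"
    have Ty: "0 \<le> odometer y" "odometer y < 1" using T_range[OF assms(1,2)] by auto
    have TGH: "(1 \<le> odometer y * 2) = (\<not> 1 \<le> y * 2)" using T_ge_half[OF assms(1,2)] by auto
    have "1/2 \<le> (1+y)/2" using assms by auto
    moreover have "\<not> (1/2 \<le> odometer y / 2)" using Ty by auto
    ultimately show ?thesis using b by (simp add: T_shift[OF assms(1,2)] phi_shift[OF assms(1,2)] phi_half[OF Ty]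
       TGH gam_def)
  qed
qed

lemma R2: "a < 2^Suc k \<Longrightarrow> 0 \<le> y \<Longrightarrow> y < 1 \<Longrightarrow>
   cc (2^Suc k) ((real a + y)/2^Suc k) = (gam y \<noteq> (odd a \<noteq> (1 \<le> k)))"
proof (induction k arbitrary: a y)
  case 0
  have "a < 2" using 0 by simp
  moreover have "(a = 1) = odd a" using \<open>a < 2\<close> by (cases a) auto
  ultimately show ?case using C1[OF 0(2,3), of a] by simp
next
  case (Suc k)
  define a' b where "a' = a div 2" and "b = a mod 2"
  define w where "w = (real b + y)/2"
  have b2: "b < 2" unfolding b_def by simp
  have a': "a' < 2^Suc k" using Suc.prems(1) unfolding a'_def by auto
  have w: "0 \<le> w" "w < 1" using Suc.prems b2 unfolding w_def by auto
  have Tw: "0 \<le> odometer w" "odometer w < 1" using T_range[OF w] by auto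
  have eq: "(real a + y)/2^Suc (Suc k) = (real a' + w)/2^Suc k" unfolding a'_def b_def w_def by (rule decomp2)
  have "cc (2^Suc (Suc k)) ((real a + y)/2^Suc (Suc k))
     = (cc (2^Suc k) ((real a' + w)/2^Suc k) \<noteq> cc (2^Suc k) ((odometer^^(2^Suc k)) ((real a' + w)/2^Suc k)))"
    unfolding eq by (metis cc_add mult_2 power_Suc)
  also have "\<dots> = (cc (2^Suc k) ((real a' + w)/2^Suc k) \<noteq> cc (2^Suc k) ((real a' + odometer w)/2^Suc k))"
    using R1[OF a' w] by simp
  also have "\<dots> = (gam w \<noteq> gam (odometer w))" using Suc.IH[OF a' w] Suc.IH[OF a' Tw] by auto
  also have "\<dots> = (\<not> (gam y \<noteq> (b = 1)))" unfolding w_def by (rule G2[OF Suc.prems(2,3) b2])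
  also have "(b = 1) = odd a" unfolding b_def by (simp add: odd_iff_mod_2_eq_one)
  finally show ?case by simp
qed

lemma odo_level_meas[measurable]: "odo_level \<in> borel \<rightarrow>\<^sub>M count_space UNIV"
  unfolding odo_level_def by measurable
lemma mn_cocycle_meas[measurable]: "mn_cocycle \<in> borel \<rightarrow>\<^sub>M count_space UNIV"
  unfolding mn_cocycle_def by measurable
lemma odometer_meas[measurable]: "odometer \<in> borel_measurable borel"
  unfolding odometer_def by measurable
lemma odometer_pow_meas[measurable]: "odometer^^n \<in> borel_measurable borel"
proof (induction n)
  case (Suc n)
  show ?case unfolding funpow.simps(2) using Suc by (intro measurable_comp[OF _ odometer_meas])
qed simp
lemma cc_meas[measurable]: "cc n \<in> borel \<rightarrow>\<^sub>M count_space UNIV"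
proof (induction n)
  case (Suc n)
  note Suc[measurable]
  show ?case by simp
qed simp
lemma gam_meas[measurable]: "gam \<in> borel \<rightarrow>\<^sub>M count_space UNIV"
  unfolding gam_def by measurable

lemma affine_img:
  fixes S :: "real set"
  assumes S: "S \<in> sets borel" and m: "m \<noteq> 0"
  shows "(\<lambda>x. m * x + d) ` S \<in> sets borel"
    and "emeasure lborel ((\<lambda>x. m * x + d) ` S) = ennreal \<bar>m\<bar> * emeasure lborel S"
proof -
  have eq: "(\<lambda>x. m * x + d) ` S = (\<lambda>y. (y - d) / m) -` S"
  proof
    show "(\<lambda>x. m * x + d) ` S \<subseteq> (\<lambda>y. (y - d) / m) -` S" using m by auto
    show "(\<lambda>y. (y - d) / m) -` S \<subseteq> (\<lambda>x. m * x + d) ` S"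
    proof
      fix y assume "y \<in> (\<lambda>y. (y - d) / m) -` S"
      then have "(y - d)/m \<in> S" by simp
      moreover have "y = m * ((y - d)/m) + d" using m by simp
      ultimately show "y \<in> (\<lambda>x. m * x + d) ` S" by blast
    qed
  qed
  have meas: "(\<lambda>y. (y - d) / m) \<in> borel_measurable borel" by measurable
  show B: "(\<lambda>x. m * x + d) ` S \<in> sets borel"
    unfolding eq using measurable_sets_borel[OF meas S] .
  have "emeasure lebesgue ((\<lambda>x. m *\<^sub>R x + d) ` S) = \<bar>m\<bar> ^ DIM(real) * emeasure lebesgue S"
    by (rule emeasure_lebesgue_affine)
  moreover have "emeasure lebesgue S = emeasure lborel S" using S by simp
  moreover have "emeasure lebesgue ((\<lambda>x. m * x + d) ` S) = emeasure lborel ((\<lambda>x. m * x + d) ` S)"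
    using B by simp
  ultimately show "emeasure lborel ((\<lambda>x. m * x + d) ` S) = ennreal \<bar>m\<bar> * emeasure lborel S"
    by simp
qed

lemma emeasure_Ico: "a \<le> b \<Longrightarrow> emeasure lborel {a..<b::real} = ennreal (b - a)"
  by simp

definition Ew :: "bool \<Rightarrow> real set" where "Ew w = {y\<in>{0..<1}. mn_cocycle y = w}"
definition Gv :: "bool \<Rightarrow> real set" where "Gv v = {y\<in>{0..<1}. gam y = v}"

lemma Ew_meas[measurable]: "Ew w \<in> sets borel" unfolding Ew_def by measurable
lemma Gv_meas[measurable]: "Gv v \<in> sets borel" unfolding Gv_def by measurable

lemma quarter_set: "emeasure lborel {y::real. y\<in>{0..<1/2} \<and> (1/4 \<le> y) = (w::bool)} = ennreal (1/4)"
proof (cases w)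
  case True
  then have "{y\<in>{0..<1/2}. (1/4 \<le> y) = w} = {1/4..<1/2::real}" by auto
  then show ?thesis by simp
next
  case False
  then have "{y\<in>{0..<1/2}. (1/4 \<le> y) = w} = {0..<1/4::real}" by auto
  then show ?thesis by simp
qed

lemma Ew_split: "Ew w = {y\<in>{0..<1/2}. (1/4 \<le> y) = w} \<union> (\<lambda>z. (1/2) * z + 1/2) ` Ew w"
proof (intro set_eqI iffI)
  fix y assume y: "y \<in> Ew w"
  show "y \<in> {y\<in>{0..<1/2}. (1/4 \<le> y) = w} \<union> (\<lambda>z. (1/2) * z + 1/2) ` Ew w"
  proof (cases "y < 1/2")
    case True
    have "mn_cocycle ((2*y)/2) = (1/2 \<le> 2*y)" using y True by (intro phi_half) (auto simp: Ew_def)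
    then show ?thesis using y True by (auto simp: Ew_def)
  next
    case False
    have "mn_cocycle ((1 + (2*y-1))/2) = mn_cocycle (2*y-1)" using y False by (intro phi_shift) (auto simp: Ew_def)
    then have "2*y - 1 \<in> Ew w" using y False by (auto simp: Ew_def)
    moreover have "y = (1/2) * (2*y-1) + 1/2" by (simp add: field_simps)
    ultimately have "y \<in> (\<lambda>z. (1/2) * z + 1/2) ` Ew w" by (rule rev_image_eqI)
    then show ?thesis by (rule UnI2)
  qed
next
  fix y assume y: "y \<in> {y\<in>{0..<1/2}. (1/4 \<le> y) = w} \<union> (\<lambda>z. (1/2) * z + 1/2) ` Ew w"
  show "y \<in> Ew w"
  proof (cases "y < 1/2")
    case True
    have y1: "0 \<le> y" "(1/4 \<le> y) = w" using y True by (auto simp: Ew_def)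
    have "mn_cocycle ((2*y)/2) = (1/2 \<le> 2*y)" using y1 True by (intro phi_half) auto
    then show ?thesis using y1 True by (auto simp: Ew_def)
  next
    case False
    then obtain z where z: "z \<in> Ew w" "y = (1/2)*z + 1/2" using y by auto
    have "y = (1+z)/2" using z(2) by simp
    then have "mn_cocycle y = mn_cocycle z" using z(1) unfolding Ew_def
      by (subst \<open>y = (1+z)/2\<close>, intro phi_shift) auto
    moreover have "0 \<le> y" "y < 1" using z(1) \<open>y = (1+z)/2\<close> by (auto simp: Ew_def)
    ultimately show ?thesis using z(1) unfolding Ew_def by simp
  qed
qed

lemma half_solve:
  assumes "x = ennreal (1/4) + ennreal (1/2) * x" "x \<le> 1"
  shows "x = ennreal (1/2)"
proof -
  have "x \<noteq> \<top>" using assms(2) by (auto simp: top_unique)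
  then obtain r where r: "x = ennreal r" "0 \<le> r" by (cases x rule: ennreal_cases) auto
  have m: "ennreal (1/2) * ennreal r = ennreal (1/2 * r)" using r by (intro ennreal_mult[symmetric]) auto
  have p: "ennreal (1/4) + ennreal (1/2*r) = ennreal (1/4 + 1/2*r)" using r by (intro ennreal_plus[symmetric]) auto
  have "ennreal r = ennreal (1/4 + 1/2*r)" using assms(1) unfolding r(1) m p .
  then have "r = 1/4 + 1/2*r" using r by (subst (asm) ennreal_inj) auto
  then have "r = 1/2" by linarith
  then show ?thesis by (simp only: r(1))
qed

lemma Ew_measure: "emeasure lborel (Ew w) = ennreal (1/2)"
proof (rule half_solve)
  have d: "{y\<in>{0..<1/2}. (1/4 \<le> y) = w} \<inter> (\<lambda>z. (1/2) * z + 1/2) ` Ew w = {}"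
    by (auto simp: Ew_def)
  have "emeasure lborel (Ew w) = emeasure lborel {y\<in>{0..<1/2::real}. (1/4 \<le> y) = w} + emeasure lborel ((\<lambda>z. (1/2) * z + 1/2) ` Ew w)"
    apply (subst Ew_split)
    apply (rule plus_emeasure[symmetric])
    using d affine_img(1)[OF Ew_meas, of "1/2" "1/2"] by auto
  then show "emeasure lborel (Ew w) = ennreal (1/4) + ennreal (1/2) * emeasure lborel (Ew w)"
    using quarter_set affine_img(2)[OF Ew_meas, of "1/2" "1/2" w] by simp
  have "emeasure lborel (Ew w) \<le> emeasure lborel {0..<1::real}"
    by (rule emeasure_mono) (auto simp: Ew_def)
  then show "emeasure lborel (Ew w) \<le> 1" by simp
qed

lemma Gv_split: "Gv v = {y\<in>{0..<1/2}. (1/4 \<le> y) = v} \<union> (\<lambda>z. (1/2) * z + 1/2) ` Ew (\<not> v)"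
proof (intro set_eqI iffI)
  fix y assume y: "y \<in> Gv v"
  show "y \<in> {y\<in>{0..<1/2}. (1/4 \<le> y) = v} \<union> (\<lambda>z. (1/2) * z + 1/2) ` Ew (\<not> v)"
  proof (cases "y < 1/2")
    case True
    have "mn_cocycle ((2*y)/2) = (1/2 \<le> 2*y)" using y True by (intro phi_half) (auto simp: Gv_def)
    then show ?thesis using y True by (auto simp: Gv_def gam_def)
  next
    case False
    have "mn_cocycle ((1 + (2*y-1))/2) = mn_cocycle (2*y-1)" using y False by (intro phi_shift) (auto simp: Gv_def)
    then have "2*y - 1 \<in> Ew (\<not> v)" using y False by (auto simp: Ew_def Gv_def gam_def)
    moreover have "y = (1/2) * (2*y-1) + 1/2" by (simp add: field_simps)
    ultimately have "y \<in> (\<lambda>z. (1/2) * z + 1/2) ` Ew (\<not> v)" by (rule rev_image_eqI)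
    then show ?thesis by (rule UnI2)
  qed
next
  fix y assume y: "y \<in> {y\<in>{0..<1/2}. (1/4 \<le> y) = v} \<union> (\<lambda>z. (1/2) * z + 1/2) ` Ew (\<not> v)"
  show "y \<in> Gv v"
  proof (cases "y < 1/2")
    case True
    have y1: "0 \<le> y" "(1/4 \<le> y) = v" using y True by (auto simp: Ew_def)
    have "mn_cocycle ((2*y)/2) = (1/2 \<le> 2*y)" using y1 True by (intro phi_half) auto
    then show ?thesis using y1 True by (auto simp: Gv_def gam_def)
  next
    case False
    then obtain z where z: "z \<in> Ew (\<not> v)" "y = (1/2)*z + 1/2" using y by auto
    have "y = (1+z)/2" using z(2) by simp
    then have "mn_cocycle y = mn_cocycle z" using z(1) unfolding Ew_def
      by (subst \<open>y = (1+z)/2\<close>, intro phi_shift) auto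
    moreover have "0 \<le> y" "1/2 \<le> y" "y < 1" using z(1) \<open>y = (1+z)/2\<close> by (auto simp: Ew_def)
    ultimately show ?thesis using z(1) unfolding Ew_def Gv_def gam_def by simp
  qed
qed

lemma Gv_measure: "emeasure lborel (Gv v) = ennreal (1/2)"
proof -
  have d: "{y\<in>{0..<1/2}. (1/4 \<le> y) = v} \<inter> (\<lambda>z. (1/2) * z + 1/2) ` Ew (\<not> v) = {}"
    by (auto simp: Ew_def)
  have "emeasure lborel (Gv v) = emeasure lborel {y\<in>{0..<1/2::real}. (1/4 \<le> y) = v} + emeasure lborel ((\<lambda>z. (1/2) * z + 1/2) ` Ew (\<not> v))"
    apply (subst Gv_split)
    apply (rule plus_emeasure[symmetric])
    using d affine_img(1)[OF Ew_meas, of "1/2" "1/2"] by auto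
  also have "\<dots> = ennreal (1/4) + ennreal (1/2) * ennreal (1/2)"
    using quarter_set affine_img(2)[OF Ew_meas, of "1/2" "1/2" "\<not> v"] Ew_measure by simp
  also have "\<dots> = ennreal (1/4 + 1/2 * (1/2))" by (subst ennreal_plus, simp, simp, subst ennreal_mult, auto)
  also have "\<dots> = ennreal (1/2)" by simp
  finally show ?thesis .
qed

lemma trans_img:
  fixes f :: "real \<Rightarrow> real" and P :: "nat \<times> nat \<Rightarrow> real set" and \<tau> :: "nat \<times> nat \<Rightarrow> real"
  assumes X: "X \<in> sets borel" and P: "\<And>i. P i \<in> sets borel" and dP: "disjoint_family P"
    and cov: "X \<subseteq> (\<Union>i. P i)" and fe: "\<And>i x. x \<in> P i \<Longrightarrow> x \<in> X \<Longrightarrow> f x = 1 * x + \<tau> i"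
    and inj: "inj_on f X"
  shows "f ` X \<in> sets borel" "emeasure lborel (f ` X) = emeasure lborel X"
proof -
  define Y where "Y i = (\<lambda>x. 1 * x + \<tau> i) ` (X \<inter> P i)" for i
  have XP: "X \<inter> P i \<in> sets borel" for i using X P by auto
  have Ym: "Y i \<in> sets borel" for i unfolding Y_def by (rule affine_img(1)[OF XP]) simp
  have Ye: "emeasure lborel (Y i) = emeasure lborel (X \<inter> P i)" for i
    unfolding Y_def using affine_img(2)[OF XP, of 1 "\<tau> i"] by simp
  have img: "f ` X = (\<Union>i. Y i)"
  proof
    show "f ` X \<subseteq> (\<Union>i. Y i)"
    proof
      fix z assume "z \<in> f ` X"
      then obtain x where x: "x \<in> X" "z = f x" by auto
      then obtain i where "x \<in> P i" using cov by auto
      then have "z \<in> Y i" unfolding Y_def using x fe by auto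
      then show "z \<in> (\<Union>i. Y i)" by (rule UN_I[OF UNIV_I])
    qed
    show "(\<Union>i. Y i) \<subseteq> f ` X" unfolding Y_def using fe by force
  qed
  have dY: "disjoint_family Y"
  proof (unfold disjoint_family_on_def, intro ballI impI)
    fix i j :: "nat \<times> nat" assume "i \<in> UNIV" "j \<in> UNIV" "i \<noteq> j"
    show "Y i \<inter> Y j = {}"
    proof (rule ccontr)
      assume "Y i \<inter> Y j \<noteq> {}"
      then obtain z where z: "z \<in> Y i" "z \<in> Y j" by blast
      obtain x where x: "x \<in> X \<inter> P i" and ex: "z = 1 * x + \<tau> i" using z(1) unfolding Y_def by (rule imageE)
      obtain x' where x': "x' \<in> X \<inter> P j" and ex': "z = 1 * x' + \<tau> j" using z(2) unfolding Y_def by (rule imageE)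
      have "f x = z" using fe[of x i] x ex by simp
      moreover have "f x' = z" using fe[of x' j] x' ex' by simp
      ultimately have "f x = f x'" by simp
      then have "x = x'" by (rule inj_onD[OF inj]) (use x x' in auto)
      moreover have "P i \<inter> P j = {}" by (rule disjoint_family_onD[OF dP]) (use \<open>i \<noteq> j\<close> in auto)
      ultimately show False using x x' by auto
    qed
  qed
  show "f ` X \<in> sets borel" unfolding img using Ym by auto
  have "emeasure lborel (f ` X) = (\<integral>\<^sup>+i. emeasure lborel (Y i) \<partial>count_space UNIV)"
    unfolding img using emeasure_UN_countable[of UNIV Y lborel] Ym dY by simp
  also have "\<dots> = (\<integral>\<^sup>+i. emeasure lborel (X \<inter> P i) \<partial>count_space UNIV)" by (simp add: Ye)
  also have "\<dots> = emeasure lborel (\<Union>i. X \<inter> P i)"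
  proof -
    have dXP: "disjoint_family (\<lambda>i. X \<inter> P i)"
      by (rule disjoint_family_on_bisimulation[OF dP]) auto
    show ?thesis using emeasure_UN_countable[of UNIV "\<lambda>i. X \<inter> P i" lborel] XP dXP by simp
  qed
  also have "(\<Union>i. X \<inter> P i) = X" using cov by auto
  finally show "emeasure lborel (f ` X) = emeasure lborel X" .
qed

lemma T_inj: "inj_on odometer {0..<1}"
proof (rule inj_onI)
  fix x x' assume x: "x \<in> {0..<1::real}" and x': "x' \<in> {0..<1::real}" and e: "odometer x = odometer x'"
  have b: "(1/2)^Suc (odo_level x) \<le> odometer x" "odometer x < (1/2)^odo_level x"
    using T_bounds[of x] x by auto
  have b': "(1/2)^Suc (odo_level x') \<le> odometer x'" "odometer x' < (1/2)^odo_level x'"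
    using T_bounds[of x'] x' by auto
  have "odo_level x = odo_level x'"
  proof (rule ccontr)
    assume "odo_level x \<noteq> odo_level x'"
    then have "Suc (odo_level x) \<le> odo_level x' \<or> Suc (odo_level x') \<le> odo_level x" by auto
    then show False
    proof
      assume "Suc (odo_level x) \<le> odo_level x'"
      then have "(1/2::real)^odo_level x' \<le> (1/2)^Suc (odo_level x)" by (intro power_decreasing) auto
      then show False using b b' e by linarith
    next
      assume "Suc (odo_level x') \<le> odo_level x"
      then have "(1/2::real)^odo_level x \<le> (1/2)^Suc (odo_level x')" by (intro power_decreasing) auto
      then show False using b b' e by linarith
    qed
  qed
  note L = this
  have ex: "odometer x = x - 1 + (1/2)^odo_level x + (1/2)^Suc (odo_level x)"
    using x by (intro T_eq) auto
  have ex': "odometer x' = x' - 1 + (1/2)^odo_level x' + (1/2)^Suc (odo_level x')"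
    using x' by (intro T_eq) auto
  show "x = x'" using e ex ex'[unfolded L[symmetric]] by linarith
qed

lemma T_maps1: "x \<in> {0..<1::real} \<Longrightarrow> odometer x \<in> {0..<1}"
  using T_range[of x] by simp

lemma T_maps: "odometer ` {0..<1} \<subseteq> {0..<1::real}"
  using T_maps1 by (rule image_subsetI)

lemma pow_maps1: "x \<in> {0..<1::real} \<Longrightarrow> (odometer^^n) x \<in> {0..<1}"
proof (induction n)
  case (Suc n)
  then have "odometer ((odometer^^n) x) \<in> {0..<1}" by (intro T_maps1)
  then show ?case by (simp only: funpow.simps comp_apply)
qed simp

lemma pow_maps: "(odometer^^n) ` {0..<1} \<subseteq> {0..<1::real}"
  using pow_maps1 by (rule image_subsetI)

lemma pow_inj: "inj_on (odometer^^n) {0..<1::real}"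
proof (induction n)
  case (Suc n)
  have "inj_on (odometer \<circ> odometer^^n) {0..<1}"
    using Suc inj_on_subset[OF T_inj pow_maps[of n]] by (rule comp_inj_on)
  then show ?case by (simp only: funpow.simps)
qed simp

definition Sp :: "nat \<Rightarrow> real \<Rightarrow> real" where "Sp N = odometer^^(2^N)"

definition Pc :: "nat \<Rightarrow> nat \<times> nat \<Rightarrow> real set" where
  "Pc N i = {x. real (fst i) \<le> 2^N * x \<and> 2^N * x < real (fst i) + 1 \<and>
       1 - (1/2)^snd i \<le> 2^N * x - real (fst i) \<and> 2^N * x - real (fst i) < 1 - (1/2)^Suc (snd i)}"

definition tau :: "nat \<Rightarrow> nat \<times> nat \<Rightarrow> real" where
  "tau N i = ((1/2)^snd i + (1/2)^Suc (snd i) - 1) / 2^N"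

lemma Pc_meas: "Pc N i \<in> sets borel" unfolding Pc_def by measurable

lemma floor_cyl: "real a \<le> 2^N * x \<Longrightarrow> 2^N * x < real a + 1 \<Longrightarrow> \<lfloor>2^N * x\<rfloor> = int a"
  by (simp add: floor_eq_iff)

lemma Pc_disj: "disjoint_family (Pc N)"
proof (unfold disjoint_family_on_def, intro ballI impI)
  fix i j :: "nat \<times> nat" assume "i \<noteq> j"
  show "Pc N i \<inter> Pc N j = {}"
  proof (rule ccontr)
    assume "Pc N i \<inter> Pc N j \<noteq> {}"
    then obtain x where xi: "x \<in> Pc N i" and xj: "x \<in> Pc N j" by blast
    have "int (fst i) = int (fst j)" using floor_cyl[of "fst i" N x] floor_cyl[of "fst j" N x] xi xj
      unfolding Pc_def by auto
    then have f: "fst i = fst j" by simp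
    have "odo_level (2^N * x - real (fst i)) = snd i" using xi unfolding Pc_def by (intro lev_unique) auto
    moreover have "odo_level (2^N * x - real (fst j)) = snd j" using xj unfolding Pc_def by (intro lev_unique) auto
    ultimately have "snd i = snd j" using f by simp
    then show False using f \<open>i \<noteq> j\<close> by (simp add: prod_eq_iff)
  qed
qed

lemma Pc_cov: "{0..<1} \<subseteq> (\<Union>i. Pc N i)"
proof
  fix x :: real assume x: "x \<in> {0..<1}"
  define a where "a = nat \<lfloor>2^N * x\<rfloor>"
  have a: "real a \<le> 2^N * x" "2^N * x < real a + 1" using x unfolding a_def by auto
  define y where "y = 2^N * x - real a"
  have y: "0 \<le> y" "y < 1" using a unfolding y_def by auto
  have "x \<in> Pc N (a, odo_level y)" using a lev_char[OF y] unfolding Pc_def y_def by auto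
  then show "x \<in> (\<Union>i. Pc N i)" by blast
qed

lemma Sp_formula: "a < 2^N \<Longrightarrow> real a \<le> 2^N * x \<Longrightarrow> 2^N * x < real a + 1 \<Longrightarrow>
    Sp N x = (real a + odometer (2^N * x - real a)) / 2^N"
  using R1[of a N "2^N * x - real a"] unfolding Sp_def by simp

lemma Sp_piece: assumes "x \<in> Pc N i" "x \<in> {0..<1}" shows "Sp N x = 1 * x + tau N i"
proof -
  obtain a m where i: "i = (a, m)" by force
  have h: "real a \<le> 2^N * x" "2^N * x < real a + 1" "1 - (1/2)^m \<le> 2^N * x - real a"
      "2^N * x - real a < 1 - (1/2)^Suc m" using assms(1) unfolding Pc_def i by auto
  have "(2::real)^N * x < 2^N * 1" using assms(2) by (intro mult_strict_left_mono) auto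
  then have "real a < (2::real)^N" using h by linarith
  then have "real a < real ((2::nat)^N)" by simp
  then have a: "a < 2^N" by (simp only: of_nat_less_iff)
  have y: "0 \<le> 2^N * x - real a" "2^N * x - real a < 1" using h by auto
  have l: "odo_level (2^N * x - real a) = m" using h by (intro lev_unique) auto
  show ?thesis unfolding Sp_formula[OF a h(1,2)] T_eq[OF y] l tau_def i
    by (simp add: field_simps)
qed

lemma Sp_img: assumes "X \<in> sets borel" "X \<subseteq> {0..<1}"
  shows "Sp N ` X \<in> sets borel" "emeasure lborel (Sp N ` X) = emeasure lborel X"
proof -
  have inj: "inj_on (Sp N) X" unfolding Sp_def using inj_on_subset[OF pow_inj assms(2)] .
  have cov: "X \<subseteq> (\<Union>i. Pc N i)" using Pc_cov[of N] assms(2) by (rule order.trans[rotated])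
  have fe: "\<And>i x. x \<in> Pc N i \<Longrightarrow> x \<in> X \<Longrightarrow> Sp N x = 1 * x + tau N i"
    using Sp_piece assms(2) by blast
  note tr = trans_img[OF assms(1) Pc_meas Pc_disj cov fe inj]
  show "Sp N ` X \<in> sets borel" by (rule tr(1))
  show "emeasure lborel (Sp N ` X) = emeasure lborel X" by (rule tr(2))
qed

definition cyl :: "nat \<Rightarrow> nat \<Rightarrow> real set" where
  "cyl N a = {x. real a \<le> 2^N * x \<and> 2^N * x < real a + 1}"
definition Acyl :: "nat \<Rightarrow> int set \<Rightarrow> real set" where
  "Acyl j I = {x\<in>{0..<1}. \<lfloor>2^j * x\<rfloor> \<in> I}"
definition ZZ :: "nat \<Rightarrow> real set" where
  "ZZ N = {x\<in>{0..<1}. \<not> cc (2^N) x}"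

lemma cyl_meas[measurable]: "cyl N a \<in> sets borel" unfolding cyl_def by measurable
lemma Acyl_meas[measurable]: "Acyl j I \<in> sets borel" unfolding Acyl_def by measurable
lemma ZZ_meas[measurable]: "ZZ N \<in> sets borel" unfolding ZZ_def by measurable

lemma cyl_sub: assumes "a < 2^N" shows "cyl N a \<subseteq> {0..<1}"
proof
  fix x assume x: "x \<in> cyl N a"
  have "real a + 1 \<le> 2^N" using assms by (metis Suc_leI of_nat_Suc of_nat_le_iff of_nat_numeral of_nat_power add.commute)
  moreover have "real a \<le> 2^N * x" "2^N * x < real a + 1" using x unfolding cyl_def by auto
  ultimately have "(2::real)^N * x < 2^N" "0 \<le> (2::real)^N * x" by linarith+
  then have "2^N * x < 2^N * 1" "2^N * 0 \<le> 2^N * x" by simp_all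
  then have "x < 1" "0 \<le> x" by (simp_all only: mult_less_cancel_left_pos mult_le_cancel_left_pos zero_less_power zero_less_numeral)
  then show "x \<in> {0..<1}" by simp
qed

lemma cyl_pre_img: assumes "G \<subseteq> {0..<1}"
  shows "{x. 2^N * x - real a \<in> G} = (\<lambda>y. (1/2^N) * y + real a / 2^N) ` G"
proof (intro set_eqI iffI)
  fix x assume "x \<in> {x. 2^N * x - real a \<in> G}"
  then have "2^N * x - real a \<in> G" by simp
  moreover have "x = (1/2^N) * (2^N * x - real a) + real a / 2^N" by (simp add: field_simps)
  ultimately show "x \<in> (\<lambda>y. (1/2^N) * y + real a / 2^N) ` G" by (rule rev_image_eqI)
next
  fix x assume "x \<in> (\<lambda>y. (1/2^N) * y + real a / 2^N) ` G"
  then obtain y where "y \<in> G" "x = (1/2^N) * y + real a / 2^N" by auto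
  moreover have "2^N * ((1/2^N) * y + real a / 2^N) - real a = y" by (simp add: field_simps)
  ultimately show "x \<in> {x. 2^N * x - real a \<in> G}" by simp
qed

lemma cyl_pre_measure: assumes "G \<subseteq> {0..<1}" "G \<in> sets borel"
  shows "emeasure lborel {x. 2^N * x - real a \<in> G} = ennreal (1/2^N) * emeasure lborel G"
  unfolding cyl_pre_img[OF assms(1)] using affine_img(2)[OF assms(2), of "1/2^N" "real a / 2^N"] by simp

lemma cyl_eq: "cyl N a = {x. 2^N * x - real a \<in> {0..<1}}"
  unfolding cyl_def by auto

lemma cyl_measure: "emeasure lborel (cyl N a) = ennreal (1/2^N)"
  unfolding cyl_eq by (subst cyl_pre_measure) auto

lemma ZZ_cyl: assumes "a < 2^Suc K"
  shows "ZZ (Suc K) \<inter> cyl (Suc K) a = {x. 2^Suc K * x - real a \<in> Gv (odd a \<noteq> (1 \<le> K))}"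
proof (intro set_eqI iffI)
  fix x assume x: "x \<in> ZZ (Suc K) \<inter> cyl (Suc K) a"
  define y where "y = 2^Suc K * x - real a"
  have y: "0 \<le> y" "y < 1" using x unfolding y_def cyl_def by auto
  have xe: "x = (real a + y) / 2^Suc K" unfolding y_def by (simp add: field_simps)
  have "\<not> cc (2^Suc K) x" using x unfolding ZZ_def by auto
  then have "gam y = (odd a \<noteq> (1 \<le> K))" using R2[OF assms y] xe by auto
  then show "x \<in> {x. 2^Suc K * x - real a \<in> Gv (odd a \<noteq> (1 \<le> K))}" using y unfolding y_def Gv_def by simp
next
  fix x assume x: "x \<in> {x. 2^Suc K * x - real a \<in> Gv (odd a \<noteq> (1 \<le> K))}"
  define y where "y = 2^Suc K * x - real a"
  have y: "0 \<le> y" "y < 1" "gam y = (odd a \<noteq> (1 \<le> K))" using x unfolding y_def Gv_def by auto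
  have xe: "x = (real a + y) / 2^Suc K" unfolding y_def by (simp add: field_simps)
  have xc: "x \<in> cyl (Suc K) a" using y unfolding cyl_def y_def by auto
  have "\<not> cc (2^Suc K) x" using R2[OF assms y(1,2)] xe y(3) by auto
  then show "x \<in> ZZ (Suc K) \<inter> cyl (Suc K) a" using xc cyl_sub[OF assms] unfolding ZZ_def by auto
qed

lemma ZZ_cyl_measure: assumes "a < 2^Suc K"
  shows "emeasure lborel (ZZ (Suc K) \<inter> cyl (Suc K) a) = ennreal (1/2) * emeasure lborel (cyl (Suc K) a)"
proof -
  have "emeasure lborel (ZZ (Suc K) \<inter> cyl (Suc K) a) = ennreal (1/2^Suc K) * ennreal (1/2)"
  proof -
    have Gsub: "Gv v \<subseteq> {0..<1}" for v by (auto simp: Gv_def)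
    show ?thesis unfolding ZZ_cyl[OF assms] cyl_pre_measure[OF Gsub Gv_meas] Gv_measure ..
  qed
  then show ?thesis by (simp add: cyl_measure mult.commute)
qed

lemma cyl_cover: assumes "x \<in> {0..<1::real}" shows "x \<in> cyl N (nat \<lfloor>2^N * x\<rfloor>)" "nat \<lfloor>2^N * x\<rfloor> < 2^N"
proof -
  show "x \<in> cyl N (nat \<lfloor>2^N * x\<rfloor>)" using assms unfolding cyl_def by auto
  have "2^N * x < 2^N * 1" using assms by (intro mult_strict_left_mono) auto
  then have "\<lfloor>2^N * x\<rfloor> < 2^N" by (simp add: floor_less_iff)
  then show "nat \<lfloor>2^N * x\<rfloor> < 2^N" using assms by (simp add: nat_less_iff)
qed

lemma cyl_disj: "disjoint_family (cyl N)"
proof (unfold disjoint_family_on_def, intro ballI impI)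
  fix a b :: nat assume "a \<noteq> b"
  show "cyl N a \<inter> cyl N b = {}"
  proof (rule ccontr)
    assume "cyl N a \<inter> cyl N b \<noteq> {}"
    then obtain x where "x \<in> cyl N a" "x \<in> cyl N b" by blast
    then have "\<lfloor>2^N * x\<rfloor> = int a" "\<lfloor>2^N * x\<rfloor> = int b" unfolding cyl_def by (auto intro: floor_cyl)
    then show False using \<open>a \<noteq> b\<close> by simp
  qed
qed

lemma sum_cyl: assumes "W \<in> sets borel" "W \<subseteq> {0..<1}"
  shows "emeasure lborel W = (\<Sum>a<2^N. emeasure lborel (W \<inter> cyl N a))"
proof -
  have "W = (\<Union>a\<in>{..<2^N}. W \<inter> cyl N a)"
    using assms(2) cyl_cover[of _ N] by blast
  moreover have "(\<Sum>a<2^N. emeasure lborel (W \<inter> cyl N a)) = emeasure lborel (\<Union>a\<in>{..<2^N}. W \<inter> cyl N a)"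
  proof (rule sum_emeasure)
    have "disjoint_family (\<lambda>a. W \<inter> cyl N a)"
      by (rule disjoint_family_on_bisimulation[OF cyl_disj]) auto
    then show "disjoint_family_on (\<lambda>a. W \<inter> cyl N a) {..<2^N}"
      by (rule disjoint_family_on_mono[rotated]) simp
  qed (use assms(1) in auto)
  ultimately show ?thesis by simp
qed

lemma floor_j: assumes "j \<le> N" "x \<in> cyl N a"
  shows "\<lfloor>2^j * x\<rfloor> = int a div 2^(N-j)"
proof -
  have p: "(2::real)^N = 2^j * 2^(N-j)" using assms(1) by (simp add: power_add[symmetric])
  have "2^j * x = (2^N * x) / real_of_int (2^(N-j))" unfolding p by simp
  then have "\<lfloor>2^j * x\<rfloor> = \<lfloor>2^N * x\<rfloor> div 2^(N-j)"
    using floor_divide_real_eq_div[of "2^(N-j)" "2^N * x"] by simp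
  moreover have "\<lfloor>2^N * x\<rfloor> = int a" using assms(2) unfolding cyl_def by (auto intro: floor_cyl)
  ultimately show ?thesis by simp
qed

lemma Acyl_cyl: assumes "j \<le> N" "a < 2^N"
  shows "Acyl j I \<inter> cyl N a = (if int a div 2^(N-j) \<in> I then cyl N a else {})"
  using floor_j[OF assms(1)] cyl_sub[OF assms(2)] unfolding Acyl_def by auto

lemma half_density: assumes "j \<le> Suc K"
  shows "emeasure lborel (Acyl j I \<inter> ZZ (Suc K)) = ennreal (1/2) * emeasure lborel (Acyl j I)"
proof -
  let ?N = "Suc K"
  have "emeasure lborel (Acyl j I \<inter> ZZ ?N) = (\<Sum>a<2^?N. emeasure lborel ((Acyl j I \<inter> ZZ ?N) \<inter> cyl ?N a))"
    by (rule sum_cyl) (auto simp: ZZ_def)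
  also have "\<dots> = (\<Sum>a<2^?N. ennreal (1/2) * emeasure lborel (Acyl j I \<inter> cyl ?N a))"
  proof (rule sum.cong)
    fix a :: nat assume "a \<in> {..<2^?N}"
    then have a: "a < 2^?N" by simp
    have e: "(Acyl j I \<inter> ZZ ?N) \<inter> cyl ?N a = (if int a div 2^(?N-j) \<in> I then ZZ ?N \<inter> cyl ?N a else {})"
      using Acyl_cyl[OF assms a, of I] by auto
    show "emeasure lborel ((Acyl j I \<inter> ZZ ?N) \<inter> cyl ?N a) = ennreal (1/2) * emeasure lborel (Acyl j I \<inter> cyl ?N a)"
      unfolding e Acyl_cyl[OF assms a] using ZZ_cyl_measure[OF a] by auto
  qed simp
  also have "\<dots> = ennreal (1/2) * (\<Sum>a<2^?N. emeasure lborel (Acyl j I \<inter> cyl ?N a))"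
    by (simp add: sum_distrib_left)
  also have "\<dots> = ennreal (1/2) * emeasure lborel (Acyl j I)"
    by (subst sum_cyl[of "Acyl j I" ?N]) (auto simp: Acyl_def)
  finally show ?thesis .
qed

lemma Sp_cyl: assumes "a < 2^N" "x \<in> cyl N a" shows "Sp N x \<in> cyl N a"
proof -
  have h: "real a \<le> 2^N * x" "2^N * x < real a + 1" using assms(2) unfolding cyl_def by auto
  have y: "0 \<le> 2^N * x - real a" "2^N * x - real a < 1" using h by auto
  have "Sp N x = (real a + odometer (2^N * x - real a)) / 2^N" by (rule Sp_formula[OF assms(1) h])
  then show ?thesis using T_range[OF y] unfolding cyl_def by (simp add: field_simps)
qed

lemma Sp_Acyl: assumes "j \<le> N" "x \<in> Acyl j I" shows "Sp N x \<in> Acyl j I"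
proof -
  have x: "x \<in> {0..<1}" using assms(2) unfolding Acyl_def by auto
  define a where "a = nat \<lfloor>2^N * x\<rfloor>"
  have a: "a < 2^N" "x \<in> cyl N a" using cyl_cover[OF x] unfolding a_def by auto
  have s: "Sp N x \<in> cyl N a" by (rule Sp_cyl[OF a])
  have "Sp N x \<in> {0..<1}" using s cyl_sub[OF a(1)] by auto
  then show ?thesis using floor_j[OF assms(1) a(2)] floor_j[OF assms(1) s] assms(2) unfolding Acyl_def by auto
qed

lemma space_haar[simp]: "space haar_Z2 = UNIV" unfolding haar_Z2_def by simp
lemma sets_haar[simp]: "sets haar_Z2 = UNIV" unfolding haar_Z2_def by simp
lemma space_R01[simp]: "space (restrict_space lborel {0..<1::real}) = {0..<1}"
  by (simp add: space_restrict_space)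
lemma sets_R01: "X \<in> sets (restrict_space lborel {0..<1::real}) \<longleftrightarrow> X \<subseteq> {0..<1} \<and> X \<in> sets borel"
  by (subst sets_restrict_space_iff) auto

lemma space_mn: "space mn_measure = {0..<1} \<times> UNIV"
  unfolding mn_measure_def by (simp add: space_pair_measure)

definition slice :: "(real \<times> bool) set \<Rightarrow> bool \<Rightarrow> real set" where
  "slice A g = {x. (x, g) \<in> A}"

lemma slice_split: "A = slice A False \<times> {False} \<union> slice A True \<times> {True}"
proof (intro set_eqI)
  fix p :: "real \<times> bool"
  obtain x g where p: "p = (x, g)" by (cases p)
  show "p \<in> A \<longleftrightarrow> p \<in> slice A False \<times> {False} \<union> slice A True \<times> {True}"
    unfolding p slice_def by (cases g) auto
qed

lemma sets_mn_iff: "A \<in> sets mn_measure \<longleftrightarrow> A \<subseteq> {0..<1} \<times> UNIV \<and> (\<forall>g. slice A g \<in> sets borel)"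
proof
  assume A: "A \<in> sets mn_measure"
  have sub: "A \<subseteq> {0..<1} \<times> UNIV" using sets.sets_into_space[OF A] space_mn by simp
  have "slice A g \<in> sets borel" for g
  proof -
    have m: "(\<lambda>x. (x, g)) \<in> measurable (restrict_space lborel {0..<1}) mn_measure"
      unfolding mn_measure_def by (rule measurable_Pair2') simp
    have "(\<lambda>x. (x, g)) -` A \<inter> space (restrict_space lborel {0..<1}) \<in> sets (restrict_space lborel {0..<1::real})"
      by (rule measurable_sets[OF m A])
    moreover have "(\<lambda>x. (x, g)) -` A \<inter> space (restrict_space lborel {0..<1}) = slice A g"
      using sub unfolding slice_def by auto
    ultimately show ?thesis using sets_R01 by auto
  qed
  then show "A \<subseteq> {0..<1} \<times> UNIV \<and> (\<forall>g. slice A g \<in> sets borel)" using sub by auto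
next
  assume A: "A \<subseteq> {0..<1} \<times> UNIV \<and> (\<forall>g. slice A g \<in> sets borel)"
  have eq: "A = slice A False \<times> {False} \<union> slice A True \<times> {True}" by (rule slice_split)
  have "slice A g \<in> sets (restrict_space lborel {0..<1})" for g
    using A unfolding sets_R01 slice_def by auto
  then have "slice A g \<times> {g} \<in> sets mn_measure" for g
    unfolding mn_measure_def by (intro pair_measureI) auto
  then show "A \<in> sets mn_measure" by (subst eq) auto
qed

lemma haar_single: "emeasure haar_Z2 {g} = ennreal (1/2)"
  unfolding haar_Z2_def by (simp add: emeasure_pmf_single)

lemma emeasure_mn: assumes A: "A \<in> sets mn_measure"
  shows "emeasure mn_measure A = ennreal (1/2) * emeasure lborel (slice A False) + ennreal (1/2) * emeasure lborel (slice A True)"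
proof -
  have sub: "A \<subseteq> {0..<1} \<times> UNIV" and sl: "\<And>g. slice A g \<in> sets borel" using A sets_mn_iff by auto
  have eq: "A = slice A False \<times> {False} \<union> slice A True \<times> {True}" by (rule slice_split)
  have sl01: "slice A g \<subseteq> {0..<1}" for g using sub unfolding slice_def by auto
  have slR: "slice A g \<in> sets (restrict_space lborel {0..<1})" for g using sl sl01 sets_R01 by auto
  have R: "slice A g \<times> {g} \<in> sets mn_measure" for g
    unfolding mn_measure_def by (intro pair_measureI) (auto simp: slR)
  interpret H: prob_space haar_Z2 unfolding haar_Z2_def by (rule prob_space_measure_pmf)
  have T: "emeasure mn_measure (slice A g \<times> {g}) = ennreal (1/2) * emeasure lborel (slice A g)" for g
  proof -
    have "emeasure mn_measure (slice A g \<times> {g}) = emeasure (restrict_space lborel {0..<1}) (slice A g) * emeasure haar_Z2 {g}"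
      unfolding mn_measure_def by (rule H.emeasure_pair_measure_Times[OF slR]) simp
    also have "emeasure (restrict_space lborel {0..<1}) (slice A g) = emeasure lborel (slice A g)"
      by (rule emeasure_restrict_space) (auto simp: sl01)
    finally show ?thesis by (simp add: haar_single mult.commute)
  qed
  have "emeasure mn_measure A = emeasure mn_measure (slice A False \<times> {False}) + emeasure mn_measure (slice A True \<times> {True})"
    apply (subst eq)
    apply (rule plus_emeasure[symmetric])
    using R by auto
  then show ?thesis by (simp add: T)
qed

lemma approx:
  assumes E: "E \<in> sets borel" "E \<subseteq> {0..<1}" and e: "0 < e"
  shows "\<exists>j I. emeasure lborel (E - Acyl j I) < ennreal e \<and> emeasure lborel (Acyl j I - E) < ennreal e"
proof -
  obtain U where U: "open U" "E \<subseteq> U" "emeasure lborel (U - E) < ennreal e"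
    using outer_regular_lborel[OF E(1) e] by blast
  have EL: "E \<in> sets lebesgue" by (rule sets_completionI_sets) (simp add: E(1))
  obtain K where K: "closed K" "K \<subseteq> E" "E - K \<in> lmeasurable" "emeasure lebesgue (E - K) < ennreal e"
    by (rule sets_lebesgue_inner_closed[OF EL e])
  have KB: "K \<in> sets borel" using K(1) by (rule borel_closed)
  have EK: "emeasure lborel (E - K) < ennreal e"
  proof -
    have "E - K \<in> sets borel" using E(1) KB by auto
    then have "emeasure lebesgue (E - K) = emeasure lborel (E - K)" by simp
    then show ?thesis using K(4) by simp
  qed
  have Kc: "K \<subseteq> cball 0 1"
  proof
    fix x assume "x \<in> K"
    then have "0 \<le> x" "x < 1" using K(2) E(2) by auto
    then show "x \<in> cball 0 1" by (simp add: dist_real_def)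
  qed
  have "bounded K" by (rule bounded_subset[OF bounded_cball Kc])
  then have cK: "compact K" using K(1) by (simp add: compact_eq_bounded_closed)
  have dj: "K \<inter> - U = {}" using K(2) U(2) by auto
  have cU: "closed (- U)" using U(1) by (simp add: closed_Compl)
  have "\<exists>d>0. \<forall>x\<in>K. \<forall>y\<in>- U. d \<le> dist x y" by (rule separate_compact_closed[OF cK cU dj])
  then obtain d where d: "d > 0" "\<forall>x\<in>K. \<forall>y\<in>- U. d \<le> dist x y" by blast
  have "\<exists>n. (1/2::real)^n < d" by (rule real_arch_pow_inv[OF d(1)]) simp
  then obtain j where j: "(1/2::real)^j < d" by blast
  define I where "I = (\<lambda>x. \<lfloor>2^j * x\<rfloor>) ` K"
  have KA: "K \<subseteq> Acyl j I" using K(2) E(2) unfolding Acyl_def I_def by auto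
  have AU: "Acyl j I \<subseteq> U"
  proof
    fix x assume x: "x \<in> Acyl j I"
    then obtain k where k: "k \<in> K" "\<lfloor>2^j * x\<rfloor> = \<lfloor>2^j * k\<rfloor>" unfolding Acyl_def I_def by auto
    have f1: "real_of_int \<lfloor>2^j * x\<rfloor> \<le> 2^j * x" "2^j * x < real_of_int \<lfloor>2^j * x\<rfloor> + 1"
      by (rule of_int_floor_le, rule real_of_int_floor_add_one_gt)
    have f2: "real_of_int \<lfloor>2^j * k\<rfloor> \<le> 2^j * k" "2^j * k < real_of_int \<lfloor>2^j * k\<rfloor> + 1"
      by (rule of_int_floor_le, rule real_of_int_floor_add_one_gt)
    have "\<bar>2^j * x - 2^j * k\<bar> < 1" unfolding abs_less_iff using f1 f2 k(2) by linarith
    then have "(2::real)^j * \<bar>x - k\<bar> < 1" by (simp add: abs_mult right_diff_distrib[symmetric])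
    then have "\<bar>x - k\<bar> < 1 / 2^j" by (simp add: field_simps)
    also have "\<dots> = (1/2)^j" by (simp add: power_one_over)
    finally have "dist k x < d" using j by (simp add: dist_real_def abs_minus_commute)
    show "x \<in> U"
    proof (rule ccontr)
      assume "x \<notin> U"
      then have "d \<le> dist k x" using d(2) k(1) by auto
      then show False using \<open>dist k x < d\<close> by simp
    qed
  qed
  have "emeasure lborel (E - Acyl j I) \<le> emeasure lborel (E - K)"
    using KA E(1) KB by (intro emeasure_mono) auto
  moreover have "emeasure lborel (Acyl j I - E) \<le> emeasure lborel (U - E)"
    using AU E(1) U(1) by (intro emeasure_mono) auto
  ultimately have "emeasure lborel (E - Acyl j I) < ennreal e" "emeasure lborel (Acyl j I - E) < ennreal e"
    using EK U(3) by (auto intro: le_less_trans)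
  then show ?thesis by blast
qed

lemma core:
  assumes B: "B \<in> sets borel" "B \<subseteq> {0..<1}" and j: "j \<le> Suc k"
  shows "ennreal (1/2) * emeasure lborel B \<le> emeasure lborel (Sp (Suc k) ` (B \<inter> ZZ (Suc k)) \<inter> B)
            + (emeasure lborel (Acyl j I - B) + emeasure lborel (Acyl j I - B) + ennreal (1/2) * emeasure lborel (B - Acyl j I))"
proof -
  let ?N = "Suc k" let ?A = "Acyl j I" let ?Z = "ZZ (Suc k)" let ?S = "Sp (Suc k)"
  define X where "X = B \<inter> ?A \<inter> ?Z"
  have Xm: "X \<in> sets borel" "X \<subseteq> {0..<1}" unfolding X_def using B by auto
  have SX: "?S ` X \<in> sets borel" "emeasure lborel (?S ` X) = emeasure lborel X" using Sp_img[OF Xm] by auto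
  have SBZ: "?S ` (B \<inter> ?Z) \<in> sets borel" using Sp_img[of "B \<inter> ?Z" ?N] B by auto
  have "emeasure lborel B \<le> emeasure lborel (?A \<union> (B - ?A))" using B by (intro emeasure_mono) auto
  also have "\<dots> \<le> emeasure lborel ?A + emeasure lborel (B - ?A)" using B by (intro emeasure_subadditive) auto
  finally have a0: "emeasure lborel B \<le> emeasure lborel ?A + emeasure lborel (B - ?A)" .
  have "ennreal (1/2) * emeasure lborel B \<le> ennreal (1/2) * (emeasure lborel ?A + emeasure lborel (B - ?A))"
    by (rule mult_left_mono[OF a0]) simp
  then have a: "ennreal (1/2) * emeasure lborel B \<le> ennreal (1/2) * emeasure lborel ?A + ennreal (1/2) * emeasure lborel (B - ?A)"
    by (simp only: distrib_left)
  have b: "ennreal (1/2) * emeasure lborel ?A = emeasure lborel (?A \<inter> ?Z)" using half_density[OF j] by simp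
  have "emeasure lborel (?A \<inter> ?Z) \<le> emeasure lborel (X \<union> (?A - B))" using B unfolding X_def by (intro emeasure_mono) auto
  also have "\<dots> \<le> emeasure lborel X + emeasure lborel (?A - B)" using B Xm by (intro emeasure_subadditive) auto
  finally have c: "emeasure lborel (?A \<inter> ?Z) \<le> emeasure lborel X + emeasure lborel (?A - B)" .
  have SXA: "?S ` X \<subseteq> ?A" using Sp_Acyl[OF j] unfolding X_def by auto
  have "emeasure lborel (?S ` X) \<le> emeasure lborel ((?S ` X \<inter> B) \<union> (?A - B))" using SXA SX B by (intro emeasure_mono) auto
  also have "\<dots> \<le> emeasure lborel (?S ` X \<inter> B) + emeasure lborel (?A - B)" using SX B by (intro emeasure_subadditive) auto
  finally have e: "emeasure lborel X \<le> emeasure lborel (?S ` X \<inter> B) + emeasure lborel (?A - B)" using SX by simp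
  have f: "emeasure lborel (?S ` X \<inter> B) \<le> emeasure lborel (?S ` (B \<inter> ?Z) \<inter> B)"
    using SBZ B unfolding X_def by (intro emeasure_mono) auto
  have e2: "emeasure lborel X \<le> emeasure lborel (?S ` (B \<inter> ?Z) \<inter> B) + emeasure lborel (?A - B)"
    using e f by (meson add_right_mono order_trans)
  note a
  also have "ennreal (1/2) * emeasure lborel ?A + ennreal (1/2) * emeasure lborel (B - ?A)
      \<le> (emeasure lborel X + emeasure lborel (?A - B)) + ennreal (1/2) * emeasure lborel (B - ?A)"
    unfolding b by (rule add_right_mono[OF c])
  also have "\<dots> \<le> ((emeasure lborel (?S ` (B \<inter> ?Z) \<inter> B) + emeasure lborel (?A - B)) + emeasure lborel (?A - B)) + ennreal (1/2) * emeasure lborel (B - ?A)"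
    by (intro add_right_mono e2)
  finally show ?thesis by (simp only: add.assoc)
qed

lemma slice_img:
  assumes B: "B \<in> sets mn_measure"
  shows "slice ((mathew_nadkarni^^(2^N)) ` B) h =
     Sp N ` (slice B h \<inter> ZZ N) \<union> Sp N ` (slice B (\<not> h) \<inter> ({0..<1} - ZZ N))"
proof -
  have sub: "B \<subseteq> {0..<1} \<times> UNIV" using B sets_mn_iff by auto
  show ?thesis
  proof (intro set_eqI iffI)
    fix z assume "z \<in> slice ((mathew_nadkarni^^(2^N)) ` B) h"
    then obtain p where p: "p \<in> B" "(mathew_nadkarni^^(2^N)) p = (z, h)" unfolding slice_def by auto
    obtain x g where pe: "p = (x, g)" by (cases p)
    have xB: "(x, g) \<in> B" using p pe by simp
    have x01: "x \<in> {0..<1}" using xB sub by auto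
    have e: "Sp N x = z" "h = (g \<noteq> cc (2^N) x)" using p(2) unfolding pe MN_pow Sp_def by auto
    show "z \<in> Sp N ` (slice B h \<inter> ZZ N) \<union> Sp N ` (slice B (\<not> h) \<inter> ({0..<1} - ZZ N))"
    proof (cases "cc (2^N) x")
      case True
      then have "x \<in> slice B (\<not> h) \<inter> ({0..<1} - ZZ N)" using xB x01 e(2) unfolding slice_def ZZ_def by auto
      then show ?thesis using e(1) by blast
    next
      case False
      then have "x \<in> slice B h \<inter> ZZ N" using xB x01 e(2) unfolding slice_def ZZ_def by auto
      then show ?thesis using e(1) by blast
    qed
  next
    fix z assume "z \<in> Sp N ` (slice B h \<inter> ZZ N) \<union> Sp N ` (slice B (\<not> h) \<inter> ({0..<1} - ZZ N))"
    then obtain x g where x: "(x, g) \<in> B" "z = Sp N x" "h = (g \<noteq> cc (2^N) x)"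
      unfolding slice_def ZZ_def by auto
    have "(mathew_nadkarni^^(2^N)) (x, g) = (z, h)" unfolding MN_pow Sp_def using x(2,3) Sp_def by simp
    then show "z \<in> slice ((mathew_nadkarni^^(2^N)) ` B) h" unfolding slice_def using x(1) by force
  qed
qed

lemma img_meas:
  assumes B: "B \<in> sets mn_measure"
  shows "(mathew_nadkarni^^(2^N)) ` B \<in> sets mn_measure"
proof -
  have sub: "B \<subseteq> {0..<1} \<times> UNIV" and sl: "\<And>g. slice B g \<in> sets borel" using B sets_mn_iff by auto
  have sl01: "slice B g \<subseteq> {0..<1}" for g using sub unfolding slice_def by auto
  have "(mathew_nadkarni^^(2^N)) ` B \<subseteq> {0..<1} \<times> UNIV"
  proof
    fix q assume "q \<in> (mathew_nadkarni^^(2^N)) ` B"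
    then obtain x g where "(x, g) \<in> B" "q = (mathew_nadkarni^^(2^N)) (x, g)" by auto
    then show "q \<in> {0..<1} \<times> UNIV" using sub pow_maps1[of x "2^N"] unfolding MN_pow by auto
  qed
  moreover have "slice ((mathew_nadkarni^^(2^N)) ` B) h \<in> sets borel" for h
  proof -
    have "Sp N ` (slice B h \<inter> ZZ N) \<in> sets borel" using sl sl01 by (intro Sp_img(1)) auto
    moreover have "Sp N ` (slice B (\<not> h) \<inter> ({0..<1} - ZZ N)) \<in> sets borel" using sl sl01 by (intro Sp_img(1)) auto
    ultimately show ?thesis unfolding slice_img[OF B] by auto
  qed
  ultimately show ?thesis using sets_mn_iff by auto
qed

lemma lower_bound:
  assumes B: "B \<in> sets mn_measure"
  shows "ennreal (1/2) * emeasure lborel (Sp N ` (slice B False \<inter> ZZ N) \<inter> slice B False)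
       + ennreal (1/2) * emeasure lborel (Sp N ` (slice B True \<inter> ZZ N) \<inter> slice B True)
     \<le> emeasure mn_measure ((mathew_nadkarni^^(2^N)) ` B \<inter> B)"
proof -
  have sub: "B \<subseteq> {0..<1} \<times> UNIV" and sl: "\<And>g. slice B g \<in> sets borel" using B sets_mn_iff by auto
  have sl01: "slice B g \<subseteq> {0..<1}" for g using sub unfolding slice_def by auto
  have F: "(mathew_nadkarni^^(2^N)) ` B \<inter> B \<in> sets mn_measure" using img_meas[OF B] B by auto
  have slF: "slice ((mathew_nadkarni^^(2^N)) ` B \<inter> B) h \<in> sets borel" for h using F sets_mn_iff by auto
  have le: "emeasure lborel (Sp N ` (slice B h \<inter> ZZ N) \<inter> slice B h) \<le> emeasure lborel (slice ((mathew_nadkarni^^(2^N)) ` B \<inter> B) h)" for h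
  proof (rule emeasure_mono)
    show "Sp N ` (slice B h \<inter> ZZ N) \<inter> slice B h \<subseteq> slice ((mathew_nadkarni^^(2^N)) ` B \<inter> B) h"
      using slice_img[OF B, of N h] unfolding slice_def by auto
  qed (use slF in auto)
  show ?thesis unfolding emeasure_mn[OF F]
    by (intro add_mono mult_left_mono le) auto
qed

lemma eventually_bound:
  assumes B: "B \<in> sets mn_measure" and e: "0 < e"
  shows "\<forall>\<^sub>F k in sequentially. ennreal (1/2) * emeasure mn_measure B
      \<le> emeasure mn_measure ((mathew_nadkarni^^(2^Suc k)) ` B \<inter> B) + ennreal e"
proof -
  have sub: "B \<subseteq> {0..<1} \<times> UNIV" and sl: "\<And>g. slice B g \<in> sets borel" using B sets_mn_iff by auto
  have sl01: "slice B g \<subseteq> {0..<1}" for g using sub unfolding slice_def by auto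
  have e3: "0 < e/3" using e by simp
  obtain j0 I0 where A0: "emeasure lborel (slice B False - Acyl j0 I0) < ennreal (e/3)"
      "emeasure lborel (Acyl j0 I0 - slice B False) < ennreal (e/3)"
    using approx[OF sl sl01 e3] by blast
  obtain j1 I1 where A1: "emeasure lborel (slice B True - Acyl j1 I1) < ennreal (e/3)"
      "emeasure lborel (Acyl j1 I1 - slice B True) < ennreal (e/3)"
    using approx[OF sl sl01 e3] by blast
  have h0: "ennreal (1/2) \<le> 1" using ennreal_leI[of "1/2" 1] by simp
  have key: "ennreal (1/2) * emeasure lborel (slice B g) \<le> emeasure lborel (Sp (Suc k) ` (slice B g \<inter> ZZ (Suc k)) \<inter> slice B g) + ennreal e"
    if "j \<le> Suc k" "emeasure lborel (slice B g - Acyl j I) < ennreal (e/3)"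
      "emeasure lborel (Acyl j I - slice B g) < ennreal (e/3)" for g j I k
  proof -
    have "emeasure lborel (Acyl j I - slice B g) + emeasure lborel (Acyl j I - slice B g) + ennreal (1/2) * emeasure lborel (slice B g - Acyl j I)
        \<le> ennreal (e/3) + ennreal (e/3) + 1 * ennreal (e/3)"
      using that(2,3) h0 by (intro add_mono mult_mono) auto
    also have "\<dots> = ennreal e"
    proof -
      have p1: "ennreal (e/3 + e/3) = ennreal (e/3) + ennreal (e/3)" by (rule ennreal_plus) (use e in auto)
      have p2: "ennreal (e/3 + e/3 + e/3) = ennreal (e/3 + e/3) + ennreal (e/3)" by (rule ennreal_plus) (use e in auto)
      have "e/3 + e/3 + e/3 = e" by simp
      then show ?thesis using p1 p2 by simp
    qed
    finally have err: "emeasure lborel (Acyl j I - slice B g) + emeasure lborel (Acyl j I - slice B g) + ennreal (1/2) * emeasure lborel (slice B g - Acyl j I) \<le> ennreal e" .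
    show ?thesis using core[OF sl sl01 that(1), where I=I] err by (meson add_left_mono order_trans)
  qed
  show ?thesis
  proof (rule eventually_sequentiallyI[of "max j0 j1"])
    fix k assume k: "max j0 j1 \<le> k"
    let ?u = "\<lambda>g. emeasure lborel (Sp (Suc k) ` (slice B g \<inter> ZZ (Suc k)) \<inter> slice B g)"
    have kF: "ennreal (1/2) * emeasure lborel (slice B False) \<le> ?u False + ennreal e"
      using key[OF _ A0] k by auto
    have kT: "ennreal (1/2) * emeasure lborel (slice B True) \<le> ?u True + ennreal e"
      using key[OF _ A1] k by auto
    have "ennreal (1/2) * emeasure mn_measure B
        = ennreal (1/2) * (ennreal (1/2) * emeasure lborel (slice B False)) + ennreal (1/2) * (ennreal (1/2) * emeasure lborel (slice B True))"
      unfolding emeasure_mn[OF B] by (simp add: distrib_left)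
    also have "\<dots> \<le> ennreal (1/2) * (?u False + ennreal e) + ennreal (1/2) * (?u True + ennreal e)"
      by (intro add_mono mult_left_mono kF kT) auto
    also have "\<dots> = (ennreal (1/2) * ?u False + ennreal (1/2) * ?u True) + (ennreal (1/2) + ennreal (1/2)) * ennreal e"
      by (simp add: distrib_left distrib_right algebra_simps)
    also have "ennreal (1/2) + ennreal (1/2) = 1"
    proof -
      have "ennreal (1/2 + 1/2) = ennreal (1/2) + ennreal (1/2)" by (rule ennreal_plus) auto
      then show ?thesis by simp
    qed
    also have "ennreal (1/2) * ?u False + ennreal (1/2) * ?u True \<le> emeasure mn_measure ((mathew_nadkarni^^(2^Suc k)) ` B \<inter> B)"
      by (rule lower_bound[OF B])
    finally show "ennreal (1/2) * emeasure mn_measure B \<le> emeasure mn_measure ((mathew_nadkarni^^(2^Suc k)) ` B \<inter> B) + ennreal e"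
      by simp
  qed
qed

theorem mainTheorem5:
  shows "\<exists>n :: nat \<Rightarrow> nat. filterlim n at_top sequentially \<and>
    (\<forall>B \<in> sets mn_measure.
       liminf (\<lambda>k. emeasure mn_measure ((mathew_nadkarni ^^ n k) ` B \<inter> B))
         \<ge> ennreal (1/2) * emeasure mn_measure B)"
proof (intro exI conjI ballI)
  show "filterlim (\<lambda>k::nat. (2::nat)^Suc k) at_top sequentially"
    by (rule filterlim_subseq) (auto intro!: strict_monoI power_strict_increasing)
next
  fix B assume B: "B \<in> sets mn_measure"
  let ?f = "\<lambda>k. emeasure mn_measure ((mathew_nadkarni ^^ (2^Suc k)) ` B \<inter> B)"
  let ?C = "ennreal (1/2) * emeasure mn_measure B"
  show "?C \<le> liminf ?f"
  proof (rule ennreal_le_epsilon)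
    fix e :: real assume e: "0 < e"
    have ev: "\<forall>\<^sub>F k in sequentially. ?C - ennreal e \<le> ?f k"
      using eventually_bound[OF B e]
      by eventually_elim (simp add: ennreal_minus_le_iff add.commute)
    have "?C - ennreal e \<le> liminf ?f" by (rule Liminf_bounded[OF ev])
    then show "?C \<le> liminf ?f + ennreal e" by (simp add: ennreal_minus_le_iff add.commute)
  qed
qed

end
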